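(* Let $n\ge2$, $k\in\{1,\dots,n\}$, $\epsilon=1/\sqrt{n(n-1)}$, and let the Pauli strings $W_1,\dots,W_n$ on $n-1$ qubits and coefficients $c_1,\dots,c_n$ be as in the context. Define $O_k=\sum_{j=1}^n c_jW_j$ and $\mathcal E_k=W_k$ (so $\mathcal E_k=Z_k$ for $k<n$ and $\mathcal E_n=\prod_{j=1}^{n-1}Z_j$). For $1\le m<n$ let $R_m=\exp(-i\theta_mG_m/2)$, where - for $1\le m<k$: $G_m=iW_{m+1}W_m$, and $\theta_m=\arctan(\sqrt m)$ if $m<k-1$, $\theta_{k-1}=\arctan\!\big(\sqrt{k-1}\,\epsilon/c_k\big)$; - for $k\le m<n$: $G_m=iW_mW_{m+1}$, and $\theta_m=\arctan(\sqrt{n-m})$ if $m>k$, $\theta_k=\arctan\!\Big(\frac{\sqrt{n-k}\,\epsilon}{\sqrt{(k-1)\epsilon^2+c_k^2}}\Big)$. Let $U=U_RU_L$ with $U_L=R_{k-1}R_{k-2}\cdots R_1$ and $U_R=R_kR_{k+1}\cdots R_{n-1}$ (empty products equal the identity). Then $UO_kU^\dagger=\mathcal E_k$.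
   Context: $X_j,Y_j,Z_j$ are Pauli operators on qubit $j$ of an $(n-1)$-qubit system; empty products of $Z$'s are the identity. For $k\ne n$: for $1\le j<k$, $W_j=Y_jZ_{j+1}\cdots Z_{k-1}Y_k$, $c_j=\epsilon$; $W_k=Z_k$, $c_k=\sqrt{(n-1)/n}$; for $k<j<n$, $W_j=X_kZ_{k+1}\cdots Z_{j-1}X_j$, $c_j=\epsilon$; and $W_n=X_kZ_{k+1}\cdots Z_{n-1}$, $c_n=\epsilon$. For $k=n$: for $1\le j<n$, $W_j=-Z_1Z_2\cdots Z_{j-1}X_j$, $c_j=\epsilon$; $W_n=\prod_{j=1}^{n-1}Z_j$, $c_n=\sqrt{(n-1)/n}$. *)

theory Defs
  imports Complex_Main "Jordan_Normal_Form.Matrix"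
begin

definition mat_exp :: "complex mat \<Rightarrow> complex mat" where
  "mat_exp A = mat (dim_row A) (dim_col A)
     (\<lambda>(i,j). \<Sum>t. (A ^\<^sub>m t) $$ (i,j) / of_nat (fact t))"

definition dagger :: "complex mat \<Rightarrow> complex mat" where
  "dagger A = mat (dim_col A) (dim_row A) (\<lambda>(i,j). cnj (A $$ (j,i)))"

definition kron :: "complex mat \<Rightarrow> complex mat \<Rightarrow> complex mat" where
  "kron A B = mat (dim_row A * dim_row B) (dim_col A * dim_col B)
     (\<lambda>(i,j). A $$ (i div dim_row B, j div dim_col B) * B $$ (i mod dim_row B, j mod dim_col B))"

datatype pauli = PI | PX | PY | PZ

fun pmat :: "pauli \<Rightarrow> complex mat" where
  "pmat PI = mat_of_rows_list 2 [[1,0],[0,1]]"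
| "pmat PX = mat_of_rows_list 2 [[0,1],[1,0]]"
| "pmat PY = mat_of_rows_list 2 [[0,-\<i>],[\<i>,0]]"
| "pmat PZ = mat_of_rows_list 2 [[1,0],[0,-1]]"

text \<open>Tensor product of single-qubit Paulis; the first list entry is qubit 1.\<close>
definition pstring :: "pauli list \<Rightarrow> complex mat" where
  "pstring ps = foldr (\<lambda>P M. kron (pmat P) M) ps (1\<^sub>m 1)"

definition qop :: "nat \<Rightarrow> pauli \<Rightarrow> nat \<Rightarrow> complex mat" where
  "qop n P j = pstring (map (\<lambda>i. if i = j then P else PI) [1..<n])"

definition dimq :: "nat \<Rightarrow> nat" where
  "dimq n = 2 ^ (n - 1)"

definition mprod :: "nat \<Rightarrow> complex mat list \<Rightarrow> complex mat" where
  "mprod d Ms = foldr (*) Ms (1\<^sub>m d)"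

definition Zs :: "nat \<Rightarrow> nat \<Rightarrow> nat \<Rightarrow> complex mat" where
  "Zs n a b = mprod (dimq n) (map (qop n PZ) [a..<b])"

definition W :: "nat \<Rightarrow> nat \<Rightarrow> nat \<Rightarrow> complex mat" where
  "W n k j =
    (if k \<noteq> n then
       (if j < k then qop n PY j * Zs n (j+1) k * qop n PY k
        else if j = k then qop n PZ k
        else if j < n then qop n PX k * Zs n (k+1) j * qop n PX j
        else qop n PX k * Zs n (k+1) n)
     else
       (if j < n then (-1) \<cdot>\<^sub>m (Zs n 1 j * qop n PX j)
        else Zs n 1 n))"

definition eps :: "nat \<Rightarrow> real" where
  "eps n = 1 / sqrt (real n * (real n - 1))"

definition cc :: "nat \<Rightarrow> nat \<Rightarrow> nat \<Rightarrow> real" where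
  "cc n k j = (if j = k then sqrt ((real n - 1) / real n) else eps n)"

definition Ok :: "nat \<Rightarrow> nat \<Rightarrow> complex mat" where
  "Ok n k = foldr (+) (map (\<lambda>j. complex_of_real (cc n k j) \<cdot>\<^sub>m W n k j) [1..<n+1])
                  (0\<^sub>m (dimq n) (dimq n))"

definition Ek :: "nat \<Rightarrow> nat \<Rightarrow> complex mat" where
  "Ek n k = W n k k"

definition G :: "nat \<Rightarrow> nat \<Rightarrow> nat \<Rightarrow> complex mat" where
  "G n k m = (if m < k then \<i> \<cdot>\<^sub>m (W n k (m+1) * W n k m)
              else \<i> \<cdot>\<^sub>m (W n k m * W n k (m+1)))"

definition theta :: "nat \<Rightarrow> nat \<Rightarrow> nat \<Rightarrow> real" where
  "theta n k m =
    (if m < k then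
       (if m < k - 1 then arctan (sqrt (real m))
        else arctan (sqrt (real (k - 1)) * eps n / cc n k k))
     else
       (if m > k then arctan (sqrt (real (n - m)))
        else arctan (sqrt (real (n - k)) * eps n /
                     sqrt (real (k - 1) * (eps n)^2 + (cc n k k)^2))))"

definition R :: "nat \<Rightarrow> nat \<Rightarrow> nat \<Rightarrow> complex mat" where
  "R n k m = mat_exp ((- \<i> * complex_of_real (theta n k m) / 2) \<cdot>\<^sub>m G n k m)"

definition UL :: "nat \<Rightarrow> nat \<Rightarrow> complex mat" where
  "UL n k = mprod (dimq n) (map (R n k) (rev [1..<k]))"

definition UR :: "nat \<Rightarrow> nat \<Rightarrow> complex mat" where
  "UR n k = mprod (dimq n) (map (R n k) [k..<n])"

definition U :: "nat \<Rightarrow> nat \<Rightarrow> complex mat" where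
  "U n k = UR n k * UL n k"

end

theory Submission
  imports Defs
begin

lemma kron_carrier[simp]: "kron A B \<in> carrier_mat (dim_row A * dim_row B) (dim_col A * dim_col B)"
  by (simp add: kron_def)
lemma kron_dims[simp]: "dim_row (kron A B) = dim_row A * dim_row B" "dim_col (kron A B) = dim_col A * dim_col B"
  by (simp_all add: kron_def)

lemma kron_index:
  "i < dim_row A * dim_row B \<Longrightarrow> j < dim_col A * dim_col B \<Longrightarrow>
   kron A B $$ (i,j) = A $$ (i div dim_row B, j div dim_col B) * B $$ (i mod dim_row B, j mod dim_col B)"
  by (simp add: kron_def)

lemma sum_div_mod_split:
  fixes g :: "nat \<Rightarrow> nat \<Rightarrow> 'a::comm_monoid_add"
  assumes "0 < b"
  shows "(\<Sum>t<a*b. g (t div b) (t mod b)) = (\<Sum>u<a. \<Sum>v<b. g u v)"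
proof -
  have "(\<Sum>t<a*b. g (t div b) (t mod b)) = (\<Sum>u<a. \<Sum>t\<in>{u*b..<u*b+b}. g (t div b) (t mod b))"
    by (rule sum.nat_group[symmetric])
  also have "\<dots> = (\<Sum>u<a. \<Sum>v<b. g u v)"
  proof (rule sum.cong[OF refl])
    fix u assume "u \<in> {..<a}"
    have "(\<Sum>t\<in>{u*b..<u*b+b}. g (t div b) (t mod b)) = (\<Sum>v\<in>{0..<b}. g ((v + u*b) div b) ((v+u*b) mod b))"
      using sum.shift_bounds_nat_ivl[of "\<lambda>t. g (t div b) (t mod b)" 0 "u*b" b] by (simp add: add.commute)
    also have "\<dots> = (\<Sum>v<b. g u v)"
      using assms by (intro sum.cong) auto
    finally show "(\<Sum>t\<in>{u*b..<u*b+b}. g (t div b) (t mod b)) = (\<Sum>v<b. g u v)" .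
  qed
  finally show ?thesis .
qed

lemma kron_mult:
  fixes A B C D :: "complex mat"
  assumes A: "A \<in> carrier_mat a a'" and B: "B \<in> carrier_mat b b'"
    and C: "C \<in> carrier_mat a' c" and D: "D \<in> carrier_mat b' d"
    and pos: "0 < b" "0 < b'" "0 < d"
  shows "kron A B * kron C D = kron (A * C) (B * D)"
proof (rule eq_matI)
  fix i j assume i: "i < dim_row (kron (A * C) (B * D))" and j: "j < dim_col (kron (A * C) (B * D))"
  have i': "i < a * b" and j': "j < c * d" using i j A B C D by auto
  have idiv: "i div b < a" "i mod b < b" using i' pos by (auto simp: less_mult_imp_div_less)
  have jdiv: "j div d < c" "j mod d < d" using j' pos by (auto simp: less_mult_imp_div_less)
  have "(kron A B * kron C D) $$ (i,j) = (\<Sum>t<a'*b'. kron A B $$ (i,t) * kron C D $$ (t,j))"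
    using A B C D i' j' by (simp add: scalar_prod_def atLeast0LessThan kron_def)
  also have "\<dots> = (\<Sum>t<a'*b'. (A $$ (i div b, t div b') * C $$ (t div b', j div d)) *
                                   (B $$ (i mod b, t mod b') * D $$ (t mod b', j mod d)))"
  proof (rule sum.cong[OF refl])
    fix t assume t: "t \<in> {..<a'*b'}"
    then show "kron A B $$ (i,t) * kron C D $$ (t,j) = (A $$ (i div b, t div b') * C $$ (t div b', j div d)) *
                                   (B $$ (i mod b, t mod b') * D $$ (t mod b', j mod d))"
      using A B C D i' j' by (simp add: kron_index)
  qed
  also have "\<dots> = (\<Sum>u<a'. \<Sum>v<b'. (A $$ (i div b, u) * C $$ (u, j div d)) *
                                   (B $$ (i mod b, v) * D $$ (v, j mod d)))"
    using sum_div_mod_split[OF pos(2), of "\<lambda>u v. (A $$ (i div b, u) * C $$ (u, j div d)) *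
                                   (B $$ (i mod b, v) * D $$ (v, j mod d))" a'] by simp
  also have "\<dots> = (\<Sum>u<a'. A $$ (i div b, u) * C $$ (u, j div d)) * (\<Sum>v<b'. B $$ (i mod b, v) * D $$ (v, j mod d))"
    by (simp add: sum_product)
  also have "\<dots> = kron (A * C) (B * D) $$ (i,j)"
    using A B C D i' j' idiv jdiv by (simp add: kron_index scalar_prod_def atLeast0LessThan)
  finally show "(kron A B * kron C D) $$ (i,j) = kron (A * C) (B * D) $$ (i,j)" .
qed (use A B C D in auto)

lemma pmat_carrier[simp]: "pmat p \<in> carrier_mat 2 2"
  by (cases p) (auto simp: mat_of_rows_list_def)

fun pm :: "pauli \<Rightarrow> pauli \<Rightarrow> pauli" where
  "pm PI q = q" | "pm p PI = p"
| "pm PX PX = PI" | "pm PY PY = PI" | "pm PZ PZ = PI"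
| "pm PX PY = PZ" | "pm PY PX = PZ"
| "pm PY PZ = PX" | "pm PZ PY = PX"
| "pm PZ PX = PY" | "pm PX PZ = PY"

fun ph :: "pauli \<Rightarrow> pauli \<Rightarrow> complex" where
  "ph PX PY = \<i>" | "ph PY PX = - \<i>"
| "ph PY PZ = \<i>" | "ph PZ PY = - \<i>"
| "ph PZ PX = \<i>" | "ph PX PZ = - \<i>"
| "ph _ _ = 1"

lemma mat2_eqI:
  fixes A B :: "complex mat"
  assumes "A \<in> carrier_mat 2 2" "B \<in> carrier_mat 2 2"
    "A $$ (0,0) = B $$ (0,0)" "A $$ (0,1) = B $$ (0,1)" "A $$ (1,0) = B $$ (1,0)" "A $$ (1,1) = B $$ (1,1)"
  shows "A = B"
proof (rule eq_matI)
  fix i j assume "i < dim_row B" "j < dim_col B"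
  then have "i < 2" "j < 2" using assms by auto
  then show "A $$ (i,j) = B $$ (i,j)" using assms
    by (auto simp: less_2_cases_iff)
qed (use assms in auto)

lemma pmat_mult: "pmat p * pmat q = ph p q \<cdot>\<^sub>m pmat (pm p q)"
  by (cases p; cases q; rule mat2_eqI)
     (auto simp: mat_of_rows_list_def scalar_prod_def numeral_2_eq_2)

lemma div_mod_bounds: "i < (a::nat) * b \<Longrightarrow> i div b < a \<and> i mod b < b"
  by (metis less_mult_imp_div_less mod_less_divisor mult_0_right not_gr_zero not_less_zero)

lemma kron_smult_left: "kron (a \<cdot>\<^sub>m A) B = a \<cdot>\<^sub>m kron A B"
  by (rule eq_matI) (auto simp: kron_def div_mod_bounds)
lemma kron_smult_right: "kron A (b \<cdot>\<^sub>m B) = b \<cdot>\<^sub>m kron A B"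
  by (rule eq_matI) (auto simp: kron_def div_mod_bounds)
lemma smult_one_mat[simp]: "(1::complex) \<cdot>\<^sub>m A = A"
  by (rule eq_matI) auto
lemma smult_smult_mat[simp]: "(a::complex) \<cdot>\<^sub>m (b \<cdot>\<^sub>m A) = (a * b) \<cdot>\<^sub>m A"
  by (rule eq_matI) auto
lemma pmat_dims[simp]: "dim_row (pmat p) = 2" "dim_col (pmat p) = 2"
  by (cases p; simp add: mat_of_rows_list_def)+

lemma pstring_Nil[simp]: "pstring [] = 1\<^sub>m 1" by (simp add: pstring_def)
lemma pstring_Cons[simp]: "pstring (p # ps) = kron (pmat p) (pstring ps)" by (simp add: pstring_def)

lemma pstring_carrier[simp]: "pstring ps \<in> carrier_mat (2 ^ length ps) (2 ^ length ps)"
proof (induction ps)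
  case (Cons p ps)
  then show ?case using kron_carrier[of "pmat p" "pstring ps"] by auto
qed simp

lemma pstring_map_mult:
  "pstring (map f L) * pstring (map g L) =
     (\<Prod>i\<leftarrow>L. ph (f i) (g i)) \<cdot>\<^sub>m pstring (map (\<lambda>i. pm (f i) (g i)) L)"
proof (induction L)
  case Nil
  then show ?case by simp
next
  case (Cons a L)
  have "pstring (map f (a # L)) * pstring (map g (a # L)) =
        kron (pmat (f a) * pmat (g a)) (pstring (map f L) * pstring (map g L))"
    by (simp, rule kron_mult[where a = 2 and a' = 2 and c = 2 and b = "2 ^ length L" and b' = "2 ^ length L" and d = "2 ^ length L"]) (auto, metis pstring_carrier length_map, metis pstring_carrier length_map)
  also have "\<dots> = kron (ph (f a) (g a) \<cdot>\<^sub>m pmat (pm (f a) (g a)))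
      ((\<Prod>i\<leftarrow>L. ph (f i) (g i)) \<cdot>\<^sub>m pstring (map (\<lambda>i. pm (f i) (g i)) L))"
    by (simp add: pmat_mult Cons.IH)
  also have "\<dots> = (\<Prod>i\<leftarrow>a # L. ph (f i) (g i)) \<cdot>\<^sub>m pstring (map (\<lambda>i. pm (f i) (g i)) (a # L))"
    by (simp add: kron_smult_left kron_smult_right mult.commute)
  finally show ?case .
qed

lemma kron_one: "kron (1\<^sub>m a) (1\<^sub>m b) = (1\<^sub>m (a * b) :: complex mat)"
proof (rule eq_matI)
  fix i j assume "i < dim_row (1\<^sub>m (a * b) :: complex mat)" "j < dim_col (1\<^sub>m (a * b) :: complex mat)"
  then have ij: "i < a * b" "j < a * b" by auto
  then have "i div b < a" "i mod b < b" "j div b < a" "j mod b < b" using div_mod_bounds by blast+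
  moreover have "(i div b = j div b \<and> i mod b = j mod b) = (i = j)"
    by (metis div_mult_mod_eq)
  ultimately show "kron (1\<^sub>m a) (1\<^sub>m b) $$ (i, j) = (1\<^sub>m (a * b) :: complex mat) $$ (i, j)"
    using ij by (auto simp: kron_def)
qed auto

lemma pmat_PI: "pmat PI = 1\<^sub>m 2"
  by (rule mat2_eqI) (auto simp: mat_of_rows_list_def)

lemma pstring_id: "(\<forall>i\<in>set L. f i = PI) \<Longrightarrow> pstring (map f L) = 1\<^sub>m (2 ^ length L)"
  by (induction L) (auto simp del: pmat.simps simp: pmat_PI kron_one)

definition ac :: "pauli \<Rightarrow> pauli \<Rightarrow> bool" where
  "ac p q \<longleftrightarrow> p \<noteq> PI \<and> q \<noteq> PI \<and> p \<noteq> q"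

lemma ph_swap: "ph q p = (if ac p q then -1 else 1) * ph p q"
  by (cases p; cases q) (auto simp: ac_def)
lemma pm_swap: "pm q p = pm p q"
  by (cases p; cases q) auto
lemma pm_self: "pm p p = PI" by (cases p) auto
lemma ph_self: "ph p p = 1" by (cases p) auto

lemma ph_PI[simp]: "ph PI q = 1" "ph p PI = 1" by (cases q; simp) (cases p; simp)
lemma pm_PI[simp]: "pm PI q = q" "pm p PI = p" by (cases q; simp) (cases p; simp)

lemma pstring_disjoint:
  assumes "\<forall>i\<in>set L. (f i = PI \<and> h i = g i) \<or> (g i = PI \<and> h i = f i)"
  shows "pstring (map f L) * pstring (map g L) = pstring (map h L)"
proof -
  have 1: "(\<Prod>i\<leftarrow>L. ph (f i) (g i)) = 1"
    using assms by (induction L) auto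
  have 2: "map (\<lambda>i. pm (f i) (g i)) L = map h L"
    using assms by auto
  show ?thesis by (simp add: pstring_map_mult 1 2)
qed

lemma pstring_sq: "pstring (map f L) * pstring (map f L) = 1\<^sub>m (2 ^ length L)"
proof -
  have 1: "(\<Prod>i\<leftarrow>L. ph (f i) (f i)) = 1" by (induction L) (auto simp: ph_self)
  show ?thesis by (simp add: pstring_map_mult 1 pm_self pstring_id)
qed

lemma pstring_anti:
  "pstring (map g L) * pstring (map f L) =
    (\<Prod>i\<leftarrow>L. if ac (f i) (g i) then -1 else 1) \<cdot>\<^sub>m (pstring (map f L) * pstring (map g L))"
proof -
  have 1: "(\<Prod>i\<leftarrow>L. ph (g i) (f i)) = (\<Prod>i\<leftarrow>L. if ac (f i) (g i) then -1 else 1) * (\<Prod>i\<leftarrow>L. ph (f i) (g i))"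
    by (induction L) (auto simp: ph_swap[of "g _"])
  show ?thesis by (simp add: pstring_map_mult 1 pm_swap[of "g _"])
qed

lemma dagger_carrier[simp]: "dagger A \<in> carrier_mat (dim_col A) (dim_row A)"
  by (simp add: dagger_def)
lemma dagger_dims[simp]: "dim_row (dagger A) = dim_col A" "dim_col (dagger A) = dim_row A"
  by (simp_all add: dagger_def)
lemma dagger_index[simp]: "i < dim_col A \<Longrightarrow> j < dim_row A \<Longrightarrow> dagger A $$ (i,j) = cnj (A $$ (j,i))"
  by (simp add: dagger_def)

lemma dagger_mult:
  assumes "A \<in> carrier_mat a b" "B \<in> carrier_mat b c"
  shows "dagger (A * B) = dagger B * dagger A"
proof (rule eq_matI)
  fix i j assume "i < dim_row (dagger B * dagger A)" "j < dim_col (dagger B * dagger A)"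
  then have "i < c" "j < a" using assms by auto
  then show "dagger (A * B) $$ (i, j) = (dagger B * dagger A) $$ (i, j)"
    using assms by (auto simp: scalar_prod_def mult.commute)
qed (use assms in auto)

lemma dagger_smult: "dagger (a \<cdot>\<^sub>m A) = cnj a \<cdot>\<^sub>m dagger A"
  by (rule eq_matI) auto
lemma dagger_add: "A \<in> carrier_mat a b \<Longrightarrow> B \<in> carrier_mat a b \<Longrightarrow> dagger (A + B) = dagger A + dagger B"
  by (rule eq_matI) auto
lemma dagger_one[simp]: "dagger (1\<^sub>m d) = 1\<^sub>m d"
  by (rule eq_matI) auto

lemma dagger_kron: "dagger (kron A B) = kron (dagger A) (dagger B)"
  by (rule eq_matI) (auto simp: kron_def div_mod_bounds)

lemma dagger_pmat: "dagger (pmat p) = pmat p"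
  by (cases p; rule mat2_eqI) (auto simp: mat_of_rows_list_def)

lemma dagger_pstring: "dagger (pstring ps) = pstring ps"
  by (induction ps) (auto simp: dagger_kron dagger_pmat)

lemma mprod_Cons: "mprod d (M # Ms) = M * mprod d Ms" by (simp add: mprod_def)
lemma mprod_Nil: "mprod d [] = 1\<^sub>m d" by (simp add: mprod_def)

lemma len_upt1: "length [1..<n] = n - 1" by simp

lemma Zs_pstring: "Zs n a b = pstring (map (\<lambda>i. if a \<le> i \<and> i < b then PZ else PI) [1..<n])"
proof (induction "b - a" arbitrary: a)
  case 0
  then show ?case by (simp add: Zs_def mprod_Nil pstring_id dimq_def)
next
  case (Suc x)
  then have ab: "a < b" by simp
  have "Zs n a b = qop n PZ a * Zs n (Suc a) b"
    using ab by (simp add: Zs_def upt_conv_Cons mprod_Cons)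
  also have "\<dots> = pstring (map (\<lambda>i. if a \<le> i \<and> i < b then PZ else PI) [1..<n])"
  proof -
    have "Zs n (Suc a) b = pstring (map (\<lambda>i. if Suc a \<le> i \<and> i < b then PZ else PI) [1..<n])"
      using Suc(1)[of "Suc a"] Suc(2) by simp
    then show ?thesis unfolding qop_def
      using ab by (simp only:) (rule pstring_disjoint, auto)
  qed
  finally show ?case .
qed

definition pfun :: "nat \<Rightarrow> nat \<Rightarrow> nat \<Rightarrow> nat \<Rightarrow> pauli" where
"pfun n k j i = (if k \<noteq> n then
   (if j < k then (if i = j \<or> i = k then PY else if j < i \<and> i < k then PZ else PI)
    else if j = k then (if i = k then PZ else PI)
    else if j < n then (if i = k \<or> i = j then PX else if k < i \<and> i < j then PZ else PI)
    else (if i = k then PX else if k < i \<and> i < n then PZ else PI))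
 else (if j < n then (if i = j then PX else if i < j then PZ else PI) else PZ))"

definition ws :: "nat \<Rightarrow> nat \<Rightarrow> nat \<Rightarrow> complex" where
  "ws n k j = (if k = n \<and> j < n then -1 else 1)"

lemma W_rep:
  assumes "1 \<le> j" "1 \<le> k" "k \<le> n"
  shows "W n k j = ws n k j \<cdot>\<^sub>m pstring (map (pfun n k j) [1..<n])"
proof (cases "k = n")
  case False
  then have kn: "k < n" using assms by simp
  show ?thesis
  proof (cases "j < k")
    case True
    have "qop n PY j * Zs n (j+1) k = pstring (map (\<lambda>i. if i = j then PY else if j < i \<and> i < k then PZ else PI) [1..<n])"
      unfolding qop_def Zs_pstring by (rule pstring_disjoint) auto
    moreover have "pstring (map (\<lambda>i. if i = j then PY else if j < i \<and> i < k then PZ else PI) [1..<n]) * qop n PY k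
       = pstring (map (pfun n k j) [1..<n])"
      unfolding qop_def by (rule pstring_disjoint) (use True False in \<open>auto simp: pfun_def\<close>)
    ultimately show ?thesis using True False by (simp add: W_def ws_def)
  next
    case False2: False
    show ?thesis
    proof (cases "j = k")
      case True
      have eq: "map (\<lambda>i. if i = k then PZ else PI) [1..<n] = map (pfun n k j) [1..<n]"
        using True False by (auto simp: pfun_def)
      have "W n k j = ws n k j \<cdot>\<^sub>m pstring (map (\<lambda>i. if i = k then PZ else PI) [1..<n])"
        using True False by (simp add: W_def ws_def qop_def)
      also have "\<dots> = ws n k j \<cdot>\<^sub>m pstring (map (pfun n k j) [1..<n])" by (simp only: eq)
      finally show ?thesis .
    next
      case False3: False
      show ?thesis
      proof (cases "j < n")
        case True
        have "qop n PX k * Zs n (k+1) j = pstring (map (\<lambda>i. if i = k then PX else if k < i \<and> i < j then PZ else PI) [1..<n])"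
          unfolding qop_def Zs_pstring by (rule pstring_disjoint) auto
        moreover have "pstring (map (\<lambda>i. if i = k then PX else if k < i \<and> i < j then PZ else PI) [1..<n]) * qop n PX j
           = pstring (map (pfun n k j) [1..<n])"
          unfolding qop_def by (rule pstring_disjoint) (use True False False2 False3 in \<open>auto simp: pfun_def\<close>)
        ultimately show ?thesis using True False False2 False3 by (simp add: W_def ws_def)
      next
        case False4: False
        have "qop n PX k * Zs n (k+1) n = pstring (map (pfun n k j) [1..<n])"
          unfolding qop_def Zs_pstring by (rule pstring_disjoint) (use False False2 False3 False4 in \<open>auto simp: pfun_def\<close>)
        then show ?thesis using False False2 False3 False4 by (simp add: W_def ws_def)
      qed
    qed
  qed
next
  case True
  show ?thesis
  proof (cases "j < n")
    case jn: True
    have "Zs n 1 j * qop n PX j = pstring (map (pfun n k j) [1..<n])"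
      unfolding qop_def Zs_pstring by (rule pstring_disjoint) (use True jn in \<open>auto simp: pfun_def\<close>)
    then show ?thesis using True jn by (simp add: W_def ws_def)
  next
    case False
    have eq: "map (\<lambda>i. if 1 \<le> i \<and> i < n then PZ else PI) [1..<n] = map (pfun n k j) [1..<n]"
      using True False by (auto simp: pfun_def)
    have "W n k j = ws n k j \<cdot>\<^sub>m pstring (map (\<lambda>i. if 1 \<le> i \<and> i < n then PZ else PI) [1..<n])"
      using True False by (simp add: W_def ws_def Zs_pstring)
    also have "\<dots> = ws n k j \<cdot>\<^sub>m pstring (map (pfun n k j) [1..<n])" by (simp only: eq)
    finally show ?thesis .
  qed
qed

lemma ac_unique:
  assumes "1 \<le> j" "j < l" "l \<le> n" "1 \<le> k" "k \<le> n" "1 \<le> i" "i < n"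
  shows "ac (pfun n k j i) (pfun n k l i) \<longleftrightarrow>
         i = (if k \<noteq> n then (if l < k then l else if j \<le> k then k else j) else j)"
proof (cases "k = n")
  case True
  then show ?thesis using assms by (auto simp: pfun_def ac_def)
next
  case False
  show ?thesis
  proof (cases "l < k")
    case True
    then show ?thesis using assms False by (auto simp: pfun_def ac_def)
  next
    case F2: False
    show ?thesis
    proof (cases "j \<le> k")
      case True
      then show ?thesis using assms False F2 by (auto simp: pfun_def ac_def)
    next
      case F3: False
      then show ?thesis using assms False F2 by (auto simp: pfun_def ac_def)
    qed
  qed
qed

lemma prod_sign_one:
  assumes "distinct L" "i0 \<in> set L" "\<forall>i\<in>set L. P i \<longleftrightarrow> i = i0"
  shows "(\<Prod>i\<leftarrow>L. if P i then -1 else 1) = (-1::complex)"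
proof -
  have "(\<Prod>i\<leftarrow>L. if P i then -1 else 1) = (\<Prod>i\<in>set L. if P i then -1 else (1::complex))"
    using assms(1) by (simp add: prod.distinct_set_conv_list)
  also have "\<dots> = (\<Prod>i\<in>set L. if i = i0 then -1 else (1::complex))"
    using assms(3) by (intro prod.cong) auto
  also have "\<dots> = -1" using assms(2) by (simp add: prod.delta)
  finally show ?thesis .
qed

lemma W_carrier:
  assumes "1 \<le> j" "1 \<le> k" "k \<le> n"
  shows "W n k j \<in> carrier_mat (dimq n) (dimq n)"
  using W_rep[OF assms] pstring_carrier[of "map (pfun n k j) [1..<n]"] by (simp add: dimq_def)

lemma smult_mult_smult:
  fixes A B :: "complex mat"
  assumes "A \<in> carrier_mat a b" "B \<in> carrier_mat b c"
  shows "(x \<cdot>\<^sub>m A) * (y \<cdot>\<^sub>m B) = (x * y) \<cdot>\<^sub>m (A * B)"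
proof -
  have "(x \<cdot>\<^sub>m A) * (y \<cdot>\<^sub>m B) = x \<cdot>\<^sub>m (A * (y \<cdot>\<^sub>m B))"
    by (rule mult_smult_assoc_mat[OF assms(1)]) (use assms(2) smult_carrier_mat in blast)
  also have "\<dots> = x \<cdot>\<^sub>m (y \<cdot>\<^sub>m (A * B))" using mult_smult_distrib[OF assms] by simp
  finally show ?thesis by simp
qed

lemma ws_sq: "ws n k j * ws n k j = 1" by (simp add: ws_def)

lemma W_sq:
  assumes "1 \<le> j" "1 \<le> k" "k \<le> n"
  shows "W n k j * W n k j = 1\<^sub>m (dimq n)"
proof -
  have c: "pstring (map (pfun n k j) [1..<n]) \<in> carrier_mat (dimq n) (dimq n)"
    using pstring_carrier[of "map (pfun n k j) [1..<n]"] by (simp add: dimq_def)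
  have "W n k j * W n k j = (ws n k j * ws n k j) \<cdot>\<^sub>m (pstring (map (pfun n k j) [1..<n]) * pstring (map (pfun n k j) [1..<n]))"
    unfolding W_rep[OF assms] by (rule smult_mult_smult[OF c c])
  also have "\<dots> = 1\<^sub>m (dimq n)" unfolding ws_sq pstring_sq by (simp add: dimq_def)
  finally show ?thesis .
qed

lemma W_herm:
  assumes "1 \<le> j" "1 \<le> k" "k \<le> n"
  shows "dagger (W n k j) = W n k j"
  unfolding W_rep[OF assms] by (simp add: dagger_smult dagger_pstring ws_def)

lemma W_anti_lt:
  assumes "1 \<le> j" "j < l" "l \<le> n" "1 \<le> k" "k \<le> n"
  shows "W n k l * W n k j = (-1) \<cdot>\<^sub>m (W n k j * W n k l)"
proof -
  let ?L = "[1..<n]"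
  have cj: "pstring (map (pfun n k j) ?L) \<in> carrier_mat (dimq n) (dimq n)"
    using pstring_carrier[of "map (pfun n k j) ?L"] by (simp add: dimq_def)
  have cl: "pstring (map (pfun n k l) ?L) \<in> carrier_mat (dimq n) (dimq n)"
    using pstring_carrier[of "map (pfun n k l) ?L"] by (simp add: dimq_def)
  define i0 where "i0 = (if k \<noteq> n then (if l < k then l else if j \<le> k then k else j) else j)"
  have i0: "i0 \<in> set ?L" using assms by (auto simp: i0_def)
  have sg: "(\<Prod>i\<leftarrow>?L. if ac (pfun n k j i) (pfun n k l i) then -1 else 1) = (-1::complex)"
    by (rule prod_sign_one[OF _ i0]) (use assms ac_unique[OF assms(1-5)] in \<open>auto simp: i0_def\<close>)
  have l1: "1 \<le> l" using assms by simp
  have "W n k l * W n k j = (ws n k l * ws n k j) \<cdot>\<^sub>m (pstring (map (pfun n k l) ?L) * pstring (map (pfun n k j) ?L))"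
    unfolding W_rep[OF assms(1,4,5)] W_rep[OF l1 assms(4,5)] by (rule smult_mult_smult[OF cl cj])
  also have "\<dots> = (ws n k l * ws n k j) \<cdot>\<^sub>m ((-1) \<cdot>\<^sub>m (pstring (map (pfun n k j) ?L) * pstring (map (pfun n k l) ?L)))"
    unfolding pstring_anti[of "pfun n k l" _ "pfun n k j"] sg ..
  also have "\<dots> = (-1) \<cdot>\<^sub>m ((ws n k j * ws n k l) \<cdot>\<^sub>m (pstring (map (pfun n k j) ?L) * pstring (map (pfun n k l) ?L)))"
    by (simp add: mult.commute)
  also have "\<dots> = (-1) \<cdot>\<^sub>m (W n k j * W n k l)"
    unfolding W_rep[OF assms(1,4,5)] W_rep[OF l1 assms(4,5)] by (simp only: smult_mult_smult[OF cj cl])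
  finally show ?thesis .
qed

lemma W_anti:
  assumes "1 \<le> j" "j \<le> n" "1 \<le> l" "l \<le> n" "j \<noteq> l" "1 \<le> k" "k \<le> n"
  shows "W n k l * W n k j = (-1) \<cdot>\<^sub>m (W n k j * W n k l)"
proof (cases "j < l")
  case True
  then show ?thesis using W_anti_lt assms by simp
next
  case False
  then have "l < j" using assms by simp
  then have e: "W n k j * W n k l = (-1) \<cdot>\<^sub>m (W n k l * W n k j)" using W_anti_lt assms by simp
  show ?thesis by (simp add: e)
qed

lemma pow_smult_invol:
  fixes G :: "complex mat"
  assumes G: "G \<in> carrier_mat d d" and GG: "G * G = 1\<^sub>m d"
  shows "(z \<cdot>\<^sub>m G) ^\<^sub>m t = z ^ t \<cdot>\<^sub>m (if even t then 1\<^sub>m d else G)"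
proof (induction t)
  case 0
  then show ?case using G by simp
next
  case (Suc t)
  have X: "(if even t then 1\<^sub>m d else G) \<in> carrier_mat d d" using G by simp
  have "(z \<cdot>\<^sub>m G) ^\<^sub>m Suc t = (z ^ t \<cdot>\<^sub>m (if even t then 1\<^sub>m d else G)) * (z \<cdot>\<^sub>m G)"
    using Suc by simp
  also have "\<dots> = (z ^ t * z) \<cdot>\<^sub>m ((if even t then 1\<^sub>m d else G) * G)"
    by (rule smult_mult_smult[OF X G])
  also have "\<dots> = z ^ Suc t \<cdot>\<^sub>m (if even (Suc t) then 1\<^sub>m d else G)"
    using G GG by (simp add: mult.commute)
  finally show ?case .
qed

lemma exp_sums': "(\<lambda>t. x ^ t / of_nat (fact t)) sums exp (x::complex)"
proof -
  have "(\<lambda>t. x ^ t / of_nat (fact t)) = (\<lambda>t. x^t /\<^sub>R fact t)"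
    by (rule ext) (simp add: scaleR_conv_of_real divide_inverse mult.commute)
  then show ?thesis using exp_converges[of x] by simp
qed

lemma even_series:
  fixes a b z :: complex
  shows "(\<Sum>t. z ^ t * (if even t then a else b) / of_nat (fact t)) =
         (a + b) / 2 * exp z + (a - b) / 2 * exp (- z)"
proof -
  have "(\<lambda>t. (a + b) / 2 * (z ^ t / of_nat (fact t)) + (a - b) / 2 * ((- z) ^ t / of_nat (fact t)))
        sums ((a + b) / 2 * exp z + (a - b) / 2 * exp (- z))"
    by (intro sums_add sums_mult exp_sums')
  moreover have "(\<lambda>t. (a + b) / 2 * (z ^ t / of_nat (fact t)) + (a - b) / 2 * ((- z) ^ t / of_nat (fact t)))
     = (\<lambda>t. z ^ t * (if even t then a else b) / of_nat (fact t))"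
  proof (rule ext)
    fix t :: nat
    show "(a + b) / 2 * (z ^ t / of_nat (fact t)) + (a - b) / 2 * ((- z) ^ t / of_nat (fact t))
        = z ^ t * (if even t then a else b) / of_nat (fact t)"
      by (cases "even t") (simp_all add: field_simps)
  qed
  ultimately show ?thesis by (simp add: sums_unique[symmetric])
qed

lemma mat_exp_invol:
  fixes G :: "complex mat"
  assumes G: "G \<in> carrier_mat d d" and GG: "G * G = 1\<^sub>m d"
  shows "mat_exp (z \<cdot>\<^sub>m G) = ((exp z + exp (- z)) / 2) \<cdot>\<^sub>m 1\<^sub>m d + ((exp z - exp (- z)) / 2) \<cdot>\<^sub>m G"
proof (rule eq_matI)
  fix i j assume ij: "i < dim_row (((exp z + exp (- z)) / 2) \<cdot>\<^sub>m 1\<^sub>m d + ((exp z - exp (- z)) / 2) \<cdot>\<^sub>m G)"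
     "j < dim_col (((exp z + exp (- z)) / 2) \<cdot>\<^sub>m 1\<^sub>m d + ((exp z - exp (- z)) / 2) \<cdot>\<^sub>m G)"
  then have i: "i < d" and j: "j < d" using G by auto
  have "mat_exp (z \<cdot>\<^sub>m G) $$ (i,j) = (\<Sum>t. ((z \<cdot>\<^sub>m G) ^\<^sub>m t) $$ (i,j) / of_nat (fact t))"
    using i j G by (simp add: mat_exp_def)
  also have "\<dots> = (\<Sum>t. z ^ t * (if even t then 1\<^sub>m d $$ (i,j) else G $$ (i,j)) / of_nat (fact t))"
    using i j G by (intro arg_cong[where f=suminf] ext) (simp add: pow_smult_invol[OF G GG])
  also have "\<dots> = (1\<^sub>m d $$ (i,j) + G $$ (i,j)) / 2 * exp z + (1\<^sub>m d $$ (i,j) - G $$ (i,j)) / 2 * exp (- z)"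
    by (rule even_series)
  also have "\<dots> = (((exp z + exp (- z)) / 2) \<cdot>\<^sub>m 1\<^sub>m d + ((exp z - exp (- z)) / 2) \<cdot>\<^sub>m G) $$ (i,j)"
    using i j G by (simp add: field_simps)
  finally show "mat_exp (z \<cdot>\<^sub>m G) $$ (i,j) = (((exp z + exp (- z)) / 2) \<cdot>\<^sub>m 1\<^sub>m d + ((exp z - exp (- z)) / 2) \<cdot>\<^sub>m G) $$ (i,j)" .
qed (use G in \<open>auto simp: mat_exp_def\<close>)

lemma mat_foil:
  fixes P Q S T :: "complex mat"
  assumes "P \<in> carrier_mat d d" "Q \<in> carrier_mat d d" "S \<in> carrier_mat d d" "T \<in> carrier_mat d d"
  shows "(P + Q) * (S + T) = P * S + P * T + (Q * S + Q * T)"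
proof -
  have "(P + Q) * (S + T) = P * (S + T) + Q * (S + T)"
    by (rule add_mult_distrib_mat[OF assms(1,2), of "S + T" d]) (use assms(3,4) in simp)
  also have "\<dots> = P * S + P * T + (Q * S + Q * T)"
    using mult_add_distrib_mat[OF assms(1,3,4)] mult_add_distrib_mat[OF assms(2,3,4)] by simp
  finally show ?thesis .
qed

lemma rot_expand_anti:
  fixes G X :: "complex mat"
  assumes G: "G \<in> carrier_mat d d" and X: "X \<in> carrier_mat d d" and GG: "G * G = 1\<^sub>m d"
    and XG: "X * G = (-1) \<cdot>\<^sub>m (G * X)"
  shows "(a \<cdot>\<^sub>m 1\<^sub>m d + b \<cdot>\<^sub>m G) * X * (a \<cdot>\<^sub>m 1\<^sub>m d + (- b) \<cdot>\<^sub>m G) = (a * a + b * b) \<cdot>\<^sub>m X + (2 * a * b) \<cdot>\<^sub>m (G * X)"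
proof -
  have GX: "G * X \<in> carrier_mat d d" using G X by simp
  have 1: "(a \<cdot>\<^sub>m 1\<^sub>m d + b \<cdot>\<^sub>m G) * X = a \<cdot>\<^sub>m X + b \<cdot>\<^sub>m (G * X)"
    using G X by (simp add: add_mult_distrib_mat[of _ d d] mult_smult_assoc_mat[of _ d d])
  have 2: "(a \<cdot>\<^sub>m X + b \<cdot>\<^sub>m (G * X)) * (a \<cdot>\<^sub>m 1\<^sub>m d + (- b) \<cdot>\<^sub>m G) =
     (a \<cdot>\<^sub>m X) * (a \<cdot>\<^sub>m 1\<^sub>m d) + (a \<cdot>\<^sub>m X) * ((- b) \<cdot>\<^sub>m G) + ((b \<cdot>\<^sub>m (G * X)) * (a \<cdot>\<^sub>m 1\<^sub>m d) + (b \<cdot>\<^sub>m (G * X)) * ((- b) \<cdot>\<^sub>m G))"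
    by (rule mat_foil) (use G X in auto)
  have 3: "G * X * G = (-1) \<cdot>\<^sub>m X"
  proof -
    have "G * X * G = G * (X * G)" using G X by simp
    also have "\<dots> = G * ((-1) \<cdot>\<^sub>m (G * X))" by (simp add: XG)
    also have "\<dots> = (-1) \<cdot>\<^sub>m (G * (G * X))" using mult_smult_distrib[OF G GX] by simp
    also have "\<dots> = (-1) \<cdot>\<^sub>m (G * G * X)" using G X by simp
    finally show ?thesis using GG X by simp
  qed
  have 4: "(a \<cdot>\<^sub>m X) * (a \<cdot>\<^sub>m 1\<^sub>m d) = (a * a) \<cdot>\<^sub>m X"
    using smult_mult_smult[OF X one_carrier_mat] X by simp
  have 5: "(a \<cdot>\<^sub>m X) * ((- b) \<cdot>\<^sub>m G) = (a * b) \<cdot>\<^sub>m (G * X)"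
    using smult_mult_smult[OF X G, of a "-b"] by (simp add: XG)
  have 6: "(b \<cdot>\<^sub>m (G * X)) * (a \<cdot>\<^sub>m 1\<^sub>m d) = (a * b) \<cdot>\<^sub>m (G * X)"
    using smult_mult_smult[OF GX one_carrier_mat, of b a] GX G X by (simp add: mult.commute)
  have 7: "(b \<cdot>\<^sub>m (G * X)) * ((- b) \<cdot>\<^sub>m G) = (b * b) \<cdot>\<^sub>m X"
    using smult_mult_smult[OF GX G, of b "-b"] by (simp add: 3)
  show ?thesis
    unfolding 1 2 4 5 6 7
    by (rule eq_matI) (use G X in \<open>auto simp: algebra_simps\<close>)
qed

lemma rot_expand_comm:
  fixes G X :: "complex mat"
  assumes G: "G \<in> carrier_mat d d" and X: "X \<in> carrier_mat d d" and GG: "G * G = 1\<^sub>m d"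
    and XG: "X * G = G * X"
  shows "(a \<cdot>\<^sub>m 1\<^sub>m d + b \<cdot>\<^sub>m G) * X * (a \<cdot>\<^sub>m 1\<^sub>m d + (- b) \<cdot>\<^sub>m G) = (a * a - b * b) \<cdot>\<^sub>m X"
proof -
  have GX: "G * X \<in> carrier_mat d d" using G X by simp
  have 1: "(a \<cdot>\<^sub>m 1\<^sub>m d + b \<cdot>\<^sub>m G) * X = a \<cdot>\<^sub>m X + b \<cdot>\<^sub>m (G * X)"
    using G X by (simp add: add_mult_distrib_mat[of _ d d] mult_smult_assoc_mat[of _ d d])
  have 2: "(a \<cdot>\<^sub>m X + b \<cdot>\<^sub>m (G * X)) * (a \<cdot>\<^sub>m 1\<^sub>m d + (- b) \<cdot>\<^sub>m G) =
     (a \<cdot>\<^sub>m X) * (a \<cdot>\<^sub>m 1\<^sub>m d) + (a \<cdot>\<^sub>m X) * ((- b) \<cdot>\<^sub>m G) + ((b \<cdot>\<^sub>m (G * X)) * (a \<cdot>\<^sub>m 1\<^sub>m d) + (b \<cdot>\<^sub>m (G * X)) * ((- b) \<cdot>\<^sub>m G))"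
    by (rule mat_foil) (use G X in auto)
  have 3: "G * X * G = X"
  proof -
    have "G * X * G = G * (X * G)" using G X by simp
    also have "\<dots> = G * G * X" using G X by (simp add: XG)
    finally show ?thesis using GG X by simp
  qed
  have 4: "(a \<cdot>\<^sub>m X) * (a \<cdot>\<^sub>m 1\<^sub>m d) = (a * a) \<cdot>\<^sub>m X"
    using smult_mult_smult[OF X one_carrier_mat] X by simp
  have 5: "(a \<cdot>\<^sub>m X) * ((- b) \<cdot>\<^sub>m G) = (- a * b) \<cdot>\<^sub>m (G * X)"
    using smult_mult_smult[OF X G, of a "-b"] by (simp add: XG)
  have 6: "(b \<cdot>\<^sub>m (G * X)) * (a \<cdot>\<^sub>m 1\<^sub>m d) = (a * b) \<cdot>\<^sub>m (G * X)"
    using smult_mult_smult[OF GX one_carrier_mat, of b a] GX G X by (simp add: mult.commute)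
  have 7: "(b \<cdot>\<^sub>m (G * X)) * ((- b) \<cdot>\<^sub>m G) = (- b * b) \<cdot>\<^sub>m X"
    using smult_mult_smult[OF GX G, of b "-b"] by (simp add: 3)
  show ?thesis
    unfolding 1 2 4 5 6 7
    by (rule eq_matI) (use G X in \<open>auto simp: algebra_simps\<close>)
qed

lemma half_angle_coeffs:
  fixes th :: real
  defines "z \<equiv> - \<i> * complex_of_real th / 2"
  shows "(exp z + exp (- z)) / 2 = complex_of_real (cos (th / 2))"
    and "(exp z - exp (- z)) / 2 = - \<i> * complex_of_real (sin (th / 2))"
proof -
  have e1: "exp z = cis (- (th / 2))"
    unfolding z_def cis_conv_exp by (simp add: algebra_simps)
  have e2: "exp (- z) = cis (th / 2)"
    unfolding z_def cis_conv_exp by (simp add: algebra_simps)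
  show "(exp z + exp (- z)) / 2 = complex_of_real (cos (th / 2))"
    unfolding e1 e2 by (simp add: complex_eq_iff)
  show "(exp z - exp (- z)) / 2 = - \<i> * complex_of_real (sin (th / 2))"
    unfolding e1 e2 by (simp add: complex_eq_iff)
qed

locale cpair =
  fixes d :: nat and A B :: "complex mat"
  assumes A: "A \<in> carrier_mat d d" and B: "B \<in> carrier_mat d d"
    and AA: "A * A = 1\<^sub>m d" and BB: "B * B = 1\<^sub>m d"
    and BA: "B * A = (-1) \<cdot>\<^sub>m (A * B)"
    and hA: "dagger A = A" and hB: "dagger B = B"
begin

definition GP where "GP = \<i> \<cdot>\<^sub>m (A * B)"

lemma AB: "A * B \<in> carrier_mat d d" using A B by simp
lemma GP_carrier: "GP \<in> carrier_mat d d" using A B by (simp add: GP_def)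

lemma GP_sq: "GP * GP = 1\<^sub>m d"
proof -
  have "GP * GP = (\<i> * \<i>) \<cdot>\<^sub>m (A * B * (A * B))" unfolding GP_def by (rule smult_mult_smult[OF AB AB])
  moreover have "A * B * (A * B) = A * (B * A) * B"
    by (simp only: assoc_mult_mat[OF A B AB] assoc_mult_mat[OF A mult_carrier_mat[OF B A] B] assoc_mult_mat[OF B A B])
  moreover have "A * ((-1) \<cdot>\<^sub>m (A * B)) * B = (-1) \<cdot>\<^sub>m (A * (A * B) * B)"
    using mult_smult_distrib[OF A AB, of "-1"] mult_smult_assoc_mat[of "A * (A * B)" d d B d] A B by simp
  moreover have "A * (A * B) * B = (A * A) * (B * B)"
    by (simp only: assoc_mult_mat[OF A AB B] assoc_mult_mat[OF A A mult_carrier_mat[OF B B]] assoc_mult_mat[OF A B B])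
  ultimately show ?thesis using AA BB by (simp add: BA)
qed

lemma GP_herm: "dagger GP = GP"
proof -
  have "dagger GP = cnj \<i> \<cdot>\<^sub>m (dagger B * dagger A)" unfolding GP_def by (simp add: dagger_smult dagger_mult[OF A B])
  also have "\<dots> = (- \<i>) \<cdot>\<^sub>m (B * A)" by (simp add: hA hB)
  also have "\<dots> = GP" by (simp add: BA GP_def)
  finally show ?thesis .
qed

lemma GPA: "GP * A = (- \<i>) \<cdot>\<^sub>m B"
proof -
  have "GP * A = \<i> \<cdot>\<^sub>m (A * B * A)" unfolding GP_def using mult_smult_assoc_mat[OF AB A] by simp
  moreover have "A * B * A = A * (B * A)" using A B by simp
  moreover have "A * (B * A) = (-1) \<cdot>\<^sub>m (A * A * B)" using mult_smult_distrib[OF A AB] A B by (simp add: BA)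
  ultimately show ?thesis using AA B by simp
qed

lemma AGP: "A * GP = (-1) \<cdot>\<^sub>m (GP * A)"
proof -
  have "A * GP = \<i> \<cdot>\<^sub>m (A * (A * B))" unfolding GP_def using mult_smult_distrib[OF A AB] by simp
  moreover have "A * (A * B) = A * A * B" using A B by simp
  ultimately show ?thesis using AA B by (simp add: GPA)
qed

lemma GPB: "GP * B = \<i> \<cdot>\<^sub>m A"
proof -
  have "GP * B = \<i> \<cdot>\<^sub>m (A * B * B)" unfolding GP_def using mult_smult_assoc_mat[OF AB B] by simp
  moreover have "A * B * B = A * (B * B)" using A B by simp
  ultimately show ?thesis using BB A by simp
qed

lemma BGP: "B * GP = (-1) \<cdot>\<^sub>m (GP * B)"
proof -
  have "B * GP = \<i> \<cdot>\<^sub>m (B * (A * B))" unfolding GP_def using mult_smult_distrib[OF B AB] by simp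
  moreover have "B * (A * B) = B * A * B" using A B by simp
  moreover have "B * A * B = (-1) \<cdot>\<^sub>m (A * B * B)" using mult_smult_assoc_mat[OF AB B] by (simp add: BA)
  moreover have "A * B * B = A * (B * B)" using A B by simp
  ultimately show ?thesis using BB A by (simp add: GPB)
qed

lemma CGP:
  assumes C: "C \<in> carrier_mat d d" and CA: "C * A = (-1) \<cdot>\<^sub>m (A * C)" and CB: "C * B = (-1) \<cdot>\<^sub>m (B * C)"
  shows "C * GP = GP * C"
proof -
  have "C * GP = \<i> \<cdot>\<^sub>m (C * (A * B))" unfolding GP_def using mult_smult_distrib[OF C AB] by simp
  moreover have "C * (A * B) = C * A * B" using A B C by simp
  moreover have "C * A * B = (-1) \<cdot>\<^sub>m (A * C * B)" using mult_smult_assoc_mat[of "A * C" d d B d] A B C by (simp add: CA)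
  moreover have "A * C * B = A * (C * B)" using A B C by simp
  moreover have "A * (C * B) = (-1) \<cdot>\<^sub>m (A * (B * C))" using mult_smult_distrib[of A d d "B * C" d] A B C by (simp add: CB)
  moreover have "A * (B * C) = A * B * C" using A B C by simp
  moreover have "GP * C = \<i> \<cdot>\<^sub>m (A * B * C)" unfolding GP_def using mult_smult_assoc_mat[OF AB C] by simp
  ultimately show ?thesis by simp
qed

definition Rot :: "real \<Rightarrow> complex mat" where
  "Rot th = mat_exp ((- \<i> * complex_of_real th / 2) \<cdot>\<^sub>m GP)"

lemma Rot_form: "Rot th = complex_of_real (cos (th/2)) \<cdot>\<^sub>m 1\<^sub>m d + (- \<i> * complex_of_real (sin (th/2))) \<cdot>\<^sub>m GP"
  unfolding Rot_def mat_exp_invol[OF GP_carrier GP_sq] half_angle_coeffs ..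

lemma Rot_dagger: "dagger (Rot th) = complex_of_real (cos (th/2)) \<cdot>\<^sub>m 1\<^sub>m d + (- (- \<i> * complex_of_real (sin (th/2)))) \<cdot>\<^sub>m GP"
  unfolding Rot_form using GP_carrier
  by (simp add: dagger_add[of _ d d] dagger_smult GP_herm)

lemma Rot_carrier: "Rot th \<in> carrier_mat d d"
  unfolding Rot_form using GP_carrier by simp

lemma Rot_A: "Rot th * A * dagger (Rot th) = complex_of_real (cos th) \<cdot>\<^sub>m A + complex_of_real (- sin th) \<cdot>\<^sub>m B"
proof -
  have "Rot th * A * dagger (Rot th) =
    (complex_of_real (cos (th/2)) * complex_of_real (cos (th/2)) + (- \<i> * complex_of_real (sin (th/2))) * (- \<i> * complex_of_real (sin (th/2)))) \<cdot>\<^sub>m A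
     + (2 * complex_of_real (cos (th/2)) * (- \<i> * complex_of_real (sin (th/2)))) \<cdot>\<^sub>m (GP * A)"
    unfolding Rot_dagger unfolding Rot_form
    by (rule rot_expand_anti[OF GP_carrier A GP_sq AGP])
  also have "\<dots> = complex_of_real (cos th) \<cdot>\<^sub>m A + complex_of_real (- sin th) \<cdot>\<^sub>m B"
  proof -
    have c: "cos th = cos (th/2) * cos (th/2) - sin (th/2) * sin (th/2)"
      using cos_add[of "th/2" "th/2"] by simp
    have s: "sin th = 2 * sin (th/2) * cos (th/2)"
      using sin_add[of "th/2" "th/2"] by simp
    show ?thesis unfolding GPA c s by (simp add: algebra_simps)
  qed
  finally show ?thesis .
qed

lemma Rot_B: "Rot th * B * dagger (Rot th) = complex_of_real (cos th) \<cdot>\<^sub>m B + complex_of_real (sin th) \<cdot>\<^sub>m A"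
proof -
  have "Rot th * B * dagger (Rot th) =
    (complex_of_real (cos (th/2)) * complex_of_real (cos (th/2)) + (- \<i> * complex_of_real (sin (th/2))) * (- \<i> * complex_of_real (sin (th/2)))) \<cdot>\<^sub>m B
     + (2 * complex_of_real (cos (th/2)) * (- \<i> * complex_of_real (sin (th/2)))) \<cdot>\<^sub>m (GP * B)"
    unfolding Rot_dagger unfolding Rot_form
    by (rule rot_expand_anti[OF GP_carrier B GP_sq BGP])
  also have "\<dots> = complex_of_real (cos th) \<cdot>\<^sub>m B + complex_of_real (sin th) \<cdot>\<^sub>m A"
  proof -
    have c: "cos th = cos (th/2) * cos (th/2) - sin (th/2) * sin (th/2)"
      using cos_add[of "th/2" "th/2"] by simp
    have s: "sin th = 2 * sin (th/2) * cos (th/2)"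
      using sin_add[of "th/2" "th/2"] by simp
    show ?thesis unfolding GPB c s by (simp add: algebra_simps)
  qed
  finally show ?thesis .
qed

lemma Rot_C:
  assumes C: "C \<in> carrier_mat d d" and CA: "C * A = (-1) \<cdot>\<^sub>m (A * C)" and CB: "C * B = (-1) \<cdot>\<^sub>m (B * C)"
  shows "Rot th * C * dagger (Rot th) = C"
proof -
  have "Rot th * C * dagger (Rot th) =
    (complex_of_real (cos (th/2)) * complex_of_real (cos (th/2)) - (- \<i> * complex_of_real (sin (th/2))) * (- \<i> * complex_of_real (sin (th/2)))) \<cdot>\<^sub>m C"
    unfolding Rot_dagger unfolding Rot_form
    by (rule rot_expand_comm[OF GP_carrier C GP_sq CGP[OF C CA CB]])
  also have "\<dots> = C"
  proof -
    have "complex_of_real (cos (th/2)) * complex_of_real (cos (th/2)) - (- \<i> * complex_of_real (sin (th/2))) * (- \<i> * complex_of_real (sin (th/2)))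
        = complex_of_real (cos (th/2)) * complex_of_real (cos (th/2)) + complex_of_real (sin (th/2)) * complex_of_real (sin (th/2))"
      by (simp add: algebra_simps)
    also have "\<dots> = 1"
      using sin_cos_squared_add3[of "th/2"] by (metis of_real_1 of_real_add of_real_mult)
    finally show ?thesis by simp
  qed
  finally show ?thesis .
qed

end


definition LC :: "nat \<Rightarrow> (nat \<Rightarrow> complex mat) \<Rightarrow> (nat \<Rightarrow> real) \<Rightarrow> nat set \<Rightarrow> complex mat" where
  "LC d F v J = mat d d (\<lambda>(r,c). \<Sum>j\<in>J. complex_of_real (v j) * F j $$ (r,c))"

lemma LC_carrier[simp]: "LC d F v J \<in> carrier_mat d d" by (simp add: LC_def)

lemma LC_empty: "LC d F v {} = 0\<^sub>m d d"
  by (rule eq_matI) (auto simp: LC_def)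

lemma LC_insert:
  assumes "finite J" "j \<notin> J" "F j \<in> carrier_mat d d"
  shows "LC d F v (insert j J) = complex_of_real (v j) \<cdot>\<^sub>m F j + LC d F v J"
  by (rule eq_matI) (use assms in \<open>auto simp: LC_def\<close>)

lemma conj_add:
  fixes R X Y :: "complex mat"
  assumes "R \<in> carrier_mat d d" "X \<in> carrier_mat d d" "Y \<in> carrier_mat d d"
  shows "R * (X + Y) * dagger R = R * X * dagger R + R * Y * dagger R"
proof -
  have "R * (X + Y) = R * X + R * Y" using mult_add_distrib_mat[OF assms] .
  moreover have "(R * X + R * Y) * dagger R = R * X * dagger R + R * Y * dagger R"
    by (rule add_mult_distrib_mat[of _ d d]) (use assms in auto)
  ultimately show ?thesis by simp
qed

lemma conj_smult:
  fixes R X :: "complex mat"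
  assumes "R \<in> carrier_mat d d" "X \<in> carrier_mat d d"
  shows "R * (a \<cdot>\<^sub>m X) * dagger R = a \<cdot>\<^sub>m (R * X * dagger R)"
proof -
  have "R * (a \<cdot>\<^sub>m X) = a \<cdot>\<^sub>m (R * X)" using mult_smult_distrib[OF assms] .
  moreover have "(a \<cdot>\<^sub>m (R * X)) * dagger R = a \<cdot>\<^sub>m (R * X * dagger R)"
    by (rule mult_smult_assoc_mat[of _ d d]) (use assms in auto)
  ultimately show ?thesis by simp
qed

lemma LC_conj:
  assumes J: "finite J" and F: "\<forall>j\<in>J. F j \<in> carrier_mat d d" and Q: "Q \<in> carrier_mat d d"
  shows "Q * LC d F v J * dagger Q = LC d (\<lambda>j. Q * F j * dagger Q) v J"
  using J F
proof (induction J rule: finite_induct)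
  case empty
  then show ?case using Q by (simp add: LC_empty)
next
  case (insert j J)
  have Fj: "F j \<in> carrier_mat d d" using insert by simp
  have "Q * LC d F v (insert j J) * dagger Q = Q * (complex_of_real (v j) \<cdot>\<^sub>m F j + LC d F v J) * dagger Q"
    using LC_insert[of J j F d v, OF insert(1,2) Fj] by simp
  also have "\<dots> = complex_of_real (v j) \<cdot>\<^sub>m (Q * F j * dagger Q) + Q * LC d F v J * dagger Q"
    using conj_add[OF Q _ LC_carrier, of "complex_of_real (v j) \<cdot>\<^sub>m F j"] conj_smult[OF Q Fj] Fj by simp
  also have "\<dots> = LC d (\<lambda>j. Q * F j * dagger Q) v (insert j J)"
  proof -
    have IH: "Q * LC d F v J * dagger Q = LC d (\<lambda>j. Q * F j * dagger Q) v J" using insert by auto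
    show ?thesis unfolding IH by (rule LC_insert[symmetric]) (use insert Q Fj in auto)
  qed
  finally show ?case .
qed

lemma LC_cong: "(\<And>j. j \<in> J \<Longrightarrow> v j = v' j) \<Longrightarrow> LC d F v J = LC d F v' J"
  unfolding LC_def by (intro cong_mat refl) (auto intro!: sum.cong)

lemma LC_Fcong: "(\<And>j. j \<in> J \<Longrightarrow> F j = F' j) \<Longrightarrow> LC d F v J = LC d F' v J"
  unfolding LC_def by (intro cong_mat refl) (auto intro!: sum.cong)

lemma LC_delta:
  assumes "finite J" "k \<in> J" "F k \<in> carrier_mat d d"
  shows "LC d F (\<lambda>j. if j = k then 1 else 0) J = F k"
proof (rule eq_matI)
  fix r c assume "r < dim_row (F k)" "c < dim_col (F k)"
  then have rc: "r < d" "c < d" using assms by auto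
  have "(\<Sum>j\<in>J. complex_of_real (if j = k then 1 else 0) * F j $$ (r,c)) = (\<Sum>j\<in>J. if j = k then F j $$ (r,c) else 0)"
    by (intro sum.cong) auto
  also have "\<dots> = F k $$ (r,c)" using assms by simp
  finally show "LC d F (\<lambda>j. if j = k then 1 else 0) J $$ (r, c) = F k $$ (r, c)"
    using rc by (simp add: LC_def)
qed (use assms in \<open>auto simp: LC_def\<close>)

lemma LC_rot:
  assumes J: "finite J" and ab: "a \<in> J" "b \<in> J" "a \<noteq> b"
    and F: "\<forall>j\<in>J. F j \<in> carrier_mat d d"
    and Fo: "\<And>j. j \<in> J \<Longrightarrow> j \<noteq> a \<Longrightarrow> j \<noteq> b \<Longrightarrow> F' j = F j"
    and Fa: "F' a = complex_of_real ca \<cdot>\<^sub>m F a + complex_of_real sa \<cdot>\<^sub>m F b"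
    and Fb: "F' b = complex_of_real cb \<cdot>\<^sub>m F b + complex_of_real sb \<cdot>\<^sub>m F a"
  shows "LC d F' v J = LC d F (v(a := ca * v a + sb * v b, b := cb * v b + sa * v a)) J"
proof (rule eq_matI)
  fix r c assume rc: "r < dim_row (LC d F (v(a := ca * v a + sb * v b, b := cb * v b + sa * v a)) J)"
    "c < dim_col (LC d F (v(a := ca * v a + sb * v b, b := cb * v b + sa * v a)) J)"
  then have r: "r < d" and c: "c < d" by (auto simp: LC_def)
  let ?v' = "v(a := ca * v a + sb * v b, b := cb * v b + sa * v a)"
  have Fa': "F a \<in> carrier_mat d d" "F b \<in> carrier_mat d d" using F ab by auto
  have J': "J = insert a (insert b (J - {a, b}))" using ab by auto
  have "(\<Sum>j\<in>J. complex_of_real (v j) * F' j $$ (r,c)) =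
        complex_of_real (v a) * F' a $$ (r,c) + (complex_of_real (v b) * F' b $$ (r,c) +
        (\<Sum>j\<in>J - {a,b}. complex_of_real (v j) * F' j $$ (r,c)))"
    using J ab by (subst J') (simp add: sum.insert_remove)
  also have "(\<Sum>j\<in>J - {a,b}. complex_of_real (v j) * F' j $$ (r,c)) = (\<Sum>j\<in>J - {a,b}. complex_of_real (?v' j) * F j $$ (r,c))"
    using Fo by (intro sum.cong) auto
  also have "complex_of_real (v a) * F' a $$ (r,c) + (complex_of_real (v b) * F' b $$ (r,c) +
        (\<Sum>j\<in>J - {a,b}. complex_of_real (?v' j) * F j $$ (r,c))) =
        complex_of_real (?v' a) * F a $$ (r,c) + (complex_of_real (?v' b) * F b $$ (r,c) +
        (\<Sum>j\<in>J - {a,b}. complex_of_real (?v' j) * F j $$ (r,c)))"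
    using Fa' r c ab by (simp add: Fa Fb algebra_simps)
  also have "\<dots> = (\<Sum>j\<in>J. complex_of_real (?v' j) * F j $$ (r,c))"
    using J ab by (subst (2) J') (simp add: sum.insert_remove)
  finally show "LC d F' v J $$ (r, c) = LC d F ?v' J $$ (r, c)"
    using r c by (simp add: LC_def)
qed (auto simp: LC_def)


definition rotv :: "nat \<Rightarrow> nat \<Rightarrow> real \<Rightarrow> (nat \<Rightarrow> real) \<Rightarrow> nat \<Rightarrow> real" where
  "rotv a b th v = v(a := cos th * v a + sin th * v b, b := cos th * v b + - sin th * v a)"

lemma conj_step:
  assumes n: "1 \<le> k" "k \<le> n" and a: "1 \<le> a" "a \<le> n" and b: "1 \<le> b" "b \<le> n" and ab: "a \<noteq> b"
  shows "mat_exp ((- \<i> * complex_of_real th / 2) \<cdot>\<^sub>m (\<i> \<cdot>\<^sub>m (W n k a * W n k b))) * LC (dimq n) (W n k) v {1..n}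
          * dagger (mat_exp ((- \<i> * complex_of_real th / 2) \<cdot>\<^sub>m (\<i> \<cdot>\<^sub>m (W n k a * W n k b))))
         = LC (dimq n) (W n k) (rotv a b th v) {1..n}"
proof -
  let ?d = "dimq n"
  interpret cp: cpair ?d "W n k a" "W n k b"
    by (rule cpair.intro[OF W_carrier[OF a(1) n] W_carrier[OF b(1) n] W_sq[OF a(1) n] W_sq[OF b(1) n]
          W_anti[OF a b ab n] W_herm[OF a(1) n] W_herm[OF b(1) n]])
  have Wc: "\<forall>j\<in>{1..n}. W n k j \<in> carrier_mat ?d ?d" using n W_carrier by auto
  have E: "mat_exp ((- \<i> * complex_of_real th / 2) \<cdot>\<^sub>m (\<i> \<cdot>\<^sub>m (W n k a * W n k b))) = cp.Rot th"
    by (simp add: cp.Rot_def cp.GP_def)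
  have "cp.Rot th * LC ?d (W n k) v {1..n} * dagger (cp.Rot th) = LC ?d (\<lambda>j. cp.Rot th * W n k j * dagger (cp.Rot th)) v {1..n}"
    by (rule LC_conj[OF _ Wc cp.Rot_carrier]) simp
  also have "\<dots> = LC ?d (W n k) (v(a := cos th * v a + sin th * v b, b := cos th * v b + - sin th * v a)) {1..n}"
  proof (rule LC_rot[OF _ _ _ ab Wc])
    fix j assume j: "j \<in> {1..n}" "j \<noteq> a" "j \<noteq> b"
    have j': "1 \<le> j" "j \<le> n" using j by auto
    show "cp.Rot th * W n k j * dagger (cp.Rot th) = W n k j"
      by (rule cp.Rot_C[OF W_carrier[OF j'(1) n] W_anti[OF a j' _ n] W_anti[OF b j' _ n]]) (use j in auto)
  qed (use a b cp.Rot_A cp.Rot_B in auto)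
  finally show ?thesis unfolding E rotv_def .
qed

lemma Rm_step:
  assumes n: "1 \<le> k" "k \<le> n" and m: "1 \<le> m" "m < n"
  shows "R n k m * LC (dimq n) (W n k) v {1..n} * dagger (R n k m)
       = LC (dimq n) (W n k) (if m < k then rotv (m+1) m (theta n k m) v else rotv m (m+1) (theta n k m) v) {1..n}"
proof (cases "m < k")
  case True
  then show ?thesis unfolding R_def G_def using conj_step[OF n, of "m+1" m] n m by simp
next
  case False
  then show ?thesis unfolding R_def G_def using conj_step[OF n, of m "m+1"] n m by simp
qed

lemma Ok_LC:
  assumes n: "1 \<le> k" "k \<le> n"
  shows "Ok n k = LC (dimq n) (W n k) (cc n k) {1..n}"
proof -
  have gen: "set L \<subseteq> {1..n} \<Longrightarrow> distinct L \<Longrightarrow> foldr (+) (map (\<lambda>j. complex_of_real (cc n k j) \<cdot>\<^sub>m W n k j) L) (0\<^sub>m (dimq n) (dimq n))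
      = LC (dimq n) (W n k) (cc n k) (set L)" for L
  proof (induction L)
    case Nil
    then show ?case by (simp add: LC_empty)
  next
    case (Cons j L)
    have Wj: "W n k j \<in> carrier_mat (dimq n) (dimq n)" using Cons.prems n W_carrier by auto
    show ?case using Cons Wj by (simp add: LC_insert)
  qed
  have "Ok n k = LC (dimq n) (W n k) (cc n k) (set [1..<n+1])" unfolding Ok_def by (rule gen) auto
  also have "set [1..<n+1] = {1..n}" by auto
  finally show ?thesis .
qed

lemma mprod_carrier: "\<forall>M\<in>set Ms. M \<in> carrier_mat d d \<Longrightarrow> mprod d Ms \<in> carrier_mat d d"
  by (induction Ms) (auto simp: mprod_def)

lemma assoc5:
  fixes M P X Q N :: "complex mat"
  assumes "M \<in> carrier_mat d d" "P \<in> carrier_mat d d" "X \<in> carrier_mat d d" "Q \<in> carrier_mat d d" "N \<in> carrier_mat d d"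
  shows "M * P * X * (Q * N) = M * (P * X * Q) * N"
proof -
  have MPX: "M * P * X \<in> carrier_mat d d" using assms by simp
  have PX: "P * X \<in> carrier_mat d d" using assms by simp
  have 1: "M * P * X * (Q * N) = M * P * X * Q * N" using assoc_mult_mat[OF MPX assms(4,5)] by simp
  have 2: "M * P * X = M * (P * X)" using assoc_mult_mat[OF assms(1,2,3)] .
  have 3: "M * (P * X) * Q = M * (P * X * Q)" using assoc_mult_mat[OF assms(1) PX assms(4)] .
  show ?thesis by (subst 1, subst 2, subst 3, rule refl)
qed

lemma mprod_conj:
  assumes "\<forall>M\<in>set Ms. M \<in> carrier_mat d d" "X \<in> carrier_mat d d"
  shows "mprod d Ms * X * dagger (mprod d Ms) = foldr (\<lambda>Q Y. Q * Y * dagger Q) Ms X"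
  using assms
proof (induction Ms)
  case Nil
  then show ?case by (simp add: mprod_def)
next
  case (Cons M Ms)
  have M: "M \<in> carrier_mat d d" and P: "mprod d Ms \<in> carrier_mat d d"
    using Cons.prems mprod_carrier by auto
  have "mprod d (M # Ms) * X * dagger (mprod d (M # Ms)) = M * mprod d Ms * X * (dagger (mprod d Ms) * dagger M)"
    by (simp add: mprod_Cons dagger_mult[OF M P])
  also have "\<dots> = M * (mprod d Ms * X * dagger (mprod d Ms)) * dagger M"
    by (rule assoc5) (use M P Cons.prems in auto)
  also have "\<dots> = foldr (\<lambda>Q Y. Q * Y * dagger Q) (M # Ms) X"
    using Cons by simp
  finally show ?case .
qed


lemma givens:
  fixes p q :: real
  assumes p: "p > 0"
  shows "cos (arctan (q / p)) * p + sin (arctan (q / p)) * q = sqrt (p\<^sup>2 + q\<^sup>2)"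
    and "cos (arctan (q / p)) * q + - sin (arctan (q / p)) * p = 0"
proof -
  have pq: "p\<^sup>2 + q\<^sup>2 > 0" using p by (simp add: add_pos_nonneg)
  have "1 + (q / p)\<^sup>2 = (p\<^sup>2 + q\<^sup>2) / p\<^sup>2" using p by (simp add: field_simps power2_eq_square)
  then have S: "sqrt (1 + (q / p)\<^sup>2) = sqrt (p\<^sup>2 + q\<^sup>2) / p"
    using p by (simp add: real_sqrt_divide)
  have sp: "sqrt (p\<^sup>2 + q\<^sup>2) > 0" using pq by simp
  have c: "cos (arctan (q / p)) = p / sqrt (p\<^sup>2 + q\<^sup>2)" unfolding cos_arctan S using p sp by simp
  have s: "sin (arctan (q / p)) = q / sqrt (p\<^sup>2 + q\<^sup>2)" unfolding sin_arctan S using p sp by simp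
  have sq: "sqrt (p\<^sup>2 + q\<^sup>2) * sqrt (p\<^sup>2 + q\<^sup>2) = p\<^sup>2 + q\<^sup>2" using pq by simp
  show "cos (arctan (q / p)) * p + sin (arctan (q / p)) * q = sqrt (p\<^sup>2 + q\<^sup>2)"
  proof -
    have "p / sqrt (p\<^sup>2 + q\<^sup>2) * p + q / sqrt (p\<^sup>2 + q\<^sup>2) * q = (p\<^sup>2 + q\<^sup>2) / sqrt (p\<^sup>2 + q\<^sup>2)"
      by (simp add: add_divide_distrib power2_eq_square)
    also have "\<dots> = sqrt (p\<^sup>2 + q\<^sup>2)"
    proof -
      define S where "S = sqrt (p\<^sup>2 + q\<^sup>2)"
      have "S * S = p\<^sup>2 + q\<^sup>2" "S > 0" using sq sp by (simp_all add: S_def)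
      then have "(p\<^sup>2 + q\<^sup>2) / S = S" by (metis nonzero_mult_div_cancel_right less_irrefl)
      then show ?thesis by (simp add: S_def)
    qed
    finally show ?thesis unfolding c s .
  qed
  show "cos (arctan (q / p)) * q + - sin (arctan (q / p)) * p = 0"
    unfolding c s using sp by (simp add: field_simps)
qed

lemma rotv_givens:
  assumes "v a > 0" "a \<noteq> b"
  shows "rotv a b (arctan (v b / v a)) v = v(a := sqrt ((v a)\<^sup>2 + (v b)\<^sup>2), b := 0)"
  unfolding rotv_def using givens[OF assms(1), of "v b"] assms(2) by simp

definition sK :: "nat \<Rightarrow> nat \<Rightarrow> real" where
  "sK n k = sqrt (real (k - 1) * (eps n)\<^sup>2 + (cc n k k)\<^sup>2)"

lemma eps_pos: "n \<ge> 2 \<Longrightarrow> eps n > 0"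
  unfolding eps_def by simp

lemma eps_sq: "n \<ge> 2 \<Longrightarrow> (eps n)\<^sup>2 = 1 / (real n * (real n - 1))"
  unfolding eps_def by (simp add: power_divide)

lemma cc_pos: "n \<ge> 2 \<Longrightarrow> cc n k k > 0"
  unfolding cc_def by simp

lemma cc_sq: "n \<ge> 2 \<Longrightarrow> (cc n k k)\<^sup>2 = (real n - 1) / real n"
  unfolding cc_def by simp

lemma total_one:
  assumes "n \<ge> 2"
  shows "real (n - 1) * (eps n)\<^sup>2 + (cc n k k)\<^sup>2 = 1"
proof -
  have n1: "real (n - 1) = real n - 1" using assms by simp
  have "real n - 1 > 0" using assms by simp
  then show ?thesis unfolding n1 eps_sq[OF assms] cc_sq[OF assms] using assms by (simp add: field_simps)
qed

lemma sK_pos: "n \<ge> 2 \<Longrightarrow> sK n k > 0"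
  unfolding sK_def using cc_pos[of n k] by (simp add: add_nonneg_pos)

lemma sK_sq: "n \<ge> 2 \<Longrightarrow> (sK n k)\<^sup>2 = real (k - 1) * (eps n)\<^sup>2 + (cc n k k)\<^sup>2"
  unfolding sK_def by (simp add: add_nonneg_nonneg)


definition vL :: "nat \<Rightarrow> nat \<Rightarrow> nat \<Rightarrow> nat \<Rightarrow> real" where
  "vL n k m j = (if j < m then 0 else if j = m then (if m < k then sqrt (real m) * eps n else sK n k) else cc n k j)"

definition vR :: "nat \<Rightarrow> nat \<Rightarrow> nat \<Rightarrow> nat \<Rightarrow> real" where
  "vR n k m j = (if m = k then (if j = k then 1 else 0) else if j < k then 0 else if j = k then sK n k
     else if j < m then eps n else if j = m then sqrt (real (n - m + 1)) * eps n else 0)"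

lemma sqrt_eps: "n \<ge> 2 \<Longrightarrow> sqrt ((eps n)\<^sup>2 + (sqrt (real m) * eps n)\<^sup>2) = sqrt (real m + 1) * eps n"
proof -
  assume n: "n \<ge> 2"
  have "(eps n)\<^sup>2 + (sqrt (real m) * eps n)\<^sup>2 = (real m + 1) * (eps n)\<^sup>2"
    by (simp add: power_mult_distrib algebra_simps)
  then show ?thesis using eps_pos[OF n] by (simp add: real_sqrt_mult)
qed

lemma left_step:
  assumes n: "n \<ge> 2" and m: "1 \<le> m" "m < k" "k \<le> n"
  shows "rotv (m+1) m (theta n k m) (vL n k m) = vL n k (m+1)"
proof (cases "m + 1 < k")
  case True
  have va: "vL n k m (m+1) = eps n" using True by (simp add: vL_def cc_def)
  have vb: "vL n k m m = sqrt (real m) * eps n" using m by (simp add: vL_def)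
  have th: "theta n k m = arctan (vL n k m m / vL n k m (m+1))"
    using True m eps_pos[OF n] unfolding va vb by (simp add: theta_def)
  have "(vL n k m)(m+1 := sqrt ((vL n k m (m+1))\<^sup>2 + (vL n k m m)\<^sup>2), m := 0) = vL n k (m+1)"
    unfolding va vb sqrt_eps[OF n] by (rule ext) (use True in \<open>auto simp: vL_def add.commute\<close>)
  then show ?thesis unfolding th
    by (subst rotv_givens) (use eps_pos[OF n] va in auto)
next
  case False
  then have k: "k = m + 1" using m by simp
  have va: "vL n k m (m+1) = cc n k k" using k by (simp add: vL_def)
  have vb: "vL n k m m = sqrt (real m) * eps n" using m by (simp add: vL_def)
  have th: "theta n k m = arctan (vL n k m m / vL n k m (m+1))"
    unfolding va vb using k by (simp add: theta_def)
  have sq: "sqrt ((cc n k k)\<^sup>2 + (sqrt (real m) * eps n)\<^sup>2) = sK n k"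
    unfolding sK_def using k by (simp add: power_mult_distrib add.commute)
  have "(vL n k m)(m+1 := sqrt ((vL n k m (m+1))\<^sup>2 + (vL n k m m)\<^sup>2), m := 0) = vL n k (m+1)"
    unfolding va vb sq by (rule ext) (use k in \<open>auto simp: vL_def\<close>)
  then show ?thesis unfolding th
    by (subst rotv_givens) (use cc_pos[OF n] va in auto)
qed

lemma right_step:
  assumes n: "n \<ge> 2" and m: "1 \<le> k" "k \<le> m" "m < n"
  shows "rotv m (m+1) (theta n k m) (vR n k (m+1)) = vR n k m"
proof (cases "k < m")
  case True
  have va: "vR n k (m+1) m = eps n" using True by (simp add: vR_def)
  have vb: "vR n k (m+1) (m+1) = sqrt (real (n - m)) * eps n" using True m by (simp add: vR_def)
  have th: "theta n k m = arctan (vR n k (m+1) (m+1) / vR n k (m+1) m)"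
    using True m eps_pos[OF n] unfolding va vb by (simp add: theta_def)
  have sq: "sqrt ((eps n)\<^sup>2 + (sqrt (real (n - m)) * eps n)\<^sup>2) = sqrt (real (n - m + 1)) * eps n"
    using sqrt_eps[OF n, of "n - m"] by simp
  have "(vR n k (m+1))(m := sqrt ((vR n k (m+1) m)\<^sup>2 + (vR n k (m+1) (m+1))\<^sup>2), m+1 := 0) = vR n k m"
    unfolding va vb sq by (rule ext) (use True m in \<open>auto simp: vR_def\<close>)
  then show ?thesis unfolding th
    by (subst rotv_givens) (use eps_pos[OF n] va in auto)
next
  case False
  then have k: "k = m" using m by simp
  have va: "vR n k (m+1) m = sK n k" using k by (simp add: vR_def)
  have vb: "vR n k (m+1) (m+1) = sqrt (real (n - k)) * eps n" using k m by (simp add: vR_def)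
  have th: "theta n k m = arctan (vR n k (m+1) (m+1) / vR n k (m+1) m)"
    unfolding va vb using k by (simp add: theta_def sK_def)
  have sq: "sqrt ((sK n k)\<^sup>2 + (sqrt (real (n - k)) * eps n)\<^sup>2) = 1"
  proof -
    have "(sK n k)\<^sup>2 + (sqrt (real (n - k)) * eps n)\<^sup>2 = real (k - 1) * (eps n)\<^sup>2 + (cc n k k)\<^sup>2 + real (n - k) * (eps n)\<^sup>2"
      unfolding sK_sq[OF n] by (simp add: power_mult_distrib)
    also have "\<dots> = real (n - 1) * (eps n)\<^sup>2 + (cc n k k)\<^sup>2"
    proof -
      have "real (k - 1) + real (n - k) = real (n - 1)" using m by simp
      then show ?thesis by (simp add: algebra_simps flip: distrib_right)
    qed
    also have "\<dots> = 1" by (rule total_one[OF n])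
    finally show ?thesis by simp
  qed
  have "(vR n k (m+1))(m := sqrt ((vR n k (m+1) m)\<^sup>2 + (vR n k (m+1) (m+1))\<^sup>2), m+1 := 0) = vR n k m"
    unfolding va vb sq by (rule ext) (use k m in \<open>auto simp: vR_def\<close>)
  then show ?thesis unfolding th
    by (subst rotv_givens) (use sK_pos[OF n] va in auto)
qed


lemma R_carrier:
  assumes "1 \<le> k" "k \<le> n" "1 \<le> m" "m < n"
  shows "R n k m \<in> carrier_mat (dimq n) (dimq n)"
proof -
  have "W n k m \<in> carrier_mat (dimq n) (dimq n)" "W n k (m+1) \<in> carrier_mat (dimq n) (dimq n)"
    using W_carrier assms by auto
  then show ?thesis unfolding R_def G_def mat_exp_def by auto
qed

lemma left_sweep:
  assumes n: "n \<ge> 2" "1 \<le> k" "k \<le> n" and m: "1 \<le> m" "m \<le> k"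
  shows "foldr (\<lambda>Q Y. Q * Y * dagger Q) (map (R n k) (rev [1..<m])) (LC (dimq n) (W n k) (cc n k) {1..n})
         = LC (dimq n) (W n k) (vL n k m) {1..n}"
  using m
proof (induction m rule: nat_induct_at_least)
  case base
  show ?case using n(2) by (auto intro!: LC_cong simp: vL_def cc_def sK_def)
next
  case (Suc m)
  have ml: "m < k" "m < n" using Suc n by auto
  have "foldr (\<lambda>Q Y. Q * Y * dagger Q) (map (R n k) (rev [1..<Suc m])) (LC (dimq n) (W n k) (cc n k) {1..n})
      = R n k m * LC (dimq n) (W n k) (vL n k m) {1..n} * dagger (R n k m)"
    using Suc by simp
  also have "\<dots> = LC (dimq n) (W n k) (rotv (m+1) m (theta n k m) (vL n k m)) {1..n}"
    using Rm_step[OF n(2,3) Suc(1) ml(2)] ml by simp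
  also have "\<dots> = LC (dimq n) (W n k) (vL n k (Suc m)) {1..n}"
    using left_step[OF n(1) Suc(1) ml(1) n(3)] by simp
  finally show ?case .
qed


lemma right_sweep:
  assumes n: "n \<ge> 2" "1 \<le> k" "k \<le> n"
  shows "foldr (\<lambda>Q Y. Q * Y * dagger Q) (map (R n k) [k..<n]) (LC (dimq n) (W n k) (vL n k k) {1..n})
         = LC (dimq n) (W n k) (vR n k k) {1..n}"
proof -
  have "foldr (\<lambda>Q Y. Q * Y * dagger Q) (map (R n k) [m..<n]) (LC (dimq n) (W n k) (vL n k k) {1..n})
         = LC (dimq n) (W n k) (vR n k m) {1..n}" if "k \<le> m" "m \<le> n" for m
    using that(2,1)
  proof (induction m rule: inc_induct)
    case base
    have "vL n k k j = vR n k n j" if j: "j \<in> {1..n}" for j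
      proof (cases "k = n")
        case True
        have "sK n k = 1" unfolding sK_def True using total_one[OF n(1), of n] by simp
        then show ?thesis using True j by (simp add: vL_def vR_def)
      next
        case False
        then show ?thesis using j n by (auto simp: vL_def vR_def cc_def)
      qed
    then show ?case by (simp only: upt_conv_Nil[OF order_refl] list.map(1) foldr_Nil id_apply) (rule LC_cong, blast)
  next
    case (step m)
    have "foldr (\<lambda>Q Y. Q * Y * dagger Q) (map (R n k) [m..<n]) (LC (dimq n) (W n k) (vL n k k) {1..n})
        = R n k m * LC (dimq n) (W n k) (vR n k (Suc m)) {1..n} * dagger (R n k m)"
    proof -
      have e: "[m..<n] = m # [Suc m..<n]" using step(2) by (rule upt_conv_Cons)
      have IH: "foldr (\<lambda>Q Y. Q * Y * dagger Q) (map (R n k) [Suc m..<n]) (LC (dimq n) (W n k) (vL n k k) {1..n})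
         = LC (dimq n) (W n k) (vR n k (Suc m)) {1..n}" using step by simp
      show ?thesis unfolding e by (simp only: list.map foldr_Cons o_apply IH)
    qed
    also have "\<dots> = LC (dimq n) (W n k) (rotv m (m+1) (theta n k m) (vR n k (Suc m))) {1..n}"
      using Rm_step[OF n(2,3), of m] step n by simp
    also have "\<dots> = LC (dimq n) (W n k) (vR n k m) {1..n}"
      using right_step[OF n(1,2), of m] step by simp
    finally show ?case .
  qed
  then show ?thesis using n by simp
qed


theorem theorem1:
  fixes n k :: nat
  assumes "n \<ge> 2" and "1 \<le> k" and "k \<le> n"
  shows "U n k * Ok n k * dagger (U n k) = Ek n k"
proof -
  let ?d = "dimq n"
  let ?J = "{1..n}"
  have Rc: "\<forall>M\<in>set (map (R n k) xs). M \<in> carrier_mat ?d ?d" if "set xs \<subseteq> {1..<n}" for xs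
    using that R_carrier assms by auto
  have ULc: "UL n k \<in> carrier_mat ?d ?d" unfolding UL_def by (rule mprod_carrier, rule Rc) (use assms in auto)
  have URc: "UR n k \<in> carrier_mat ?d ?d" unfolding UR_def by (rule mprod_carrier, rule Rc) (use assms in auto)
  have Oc: "Ok n k \<in> carrier_mat ?d ?d" unfolding Ok_LC[OF assms(2,3)] by simp
  have "U n k * Ok n k * dagger (U n k) = UR n k * UL n k * Ok n k * (dagger (UL n k) * dagger (UR n k))"
    unfolding U_def by (simp add: dagger_mult[OF URc ULc])
  also have "\<dots> = UR n k * (UL n k * Ok n k * dagger (UL n k)) * dagger (UR n k)"
    by (rule assoc5) (use URc ULc Oc in auto)
  also have "UL n k * Ok n k * dagger (UL n k) = LC ?d (W n k) (vL n k k) ?J"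
  proof -
    have RcL: "\<forall>M\<in>set (map (R n k) (rev [1..<k])). M \<in> carrier_mat ?d ?d" by (rule Rc) (use assms in auto)
    show ?thesis
      unfolding UL_def Ok_LC[OF assms(2,3)] mprod_conj[OF RcL LC_carrier]
      using left_sweep[OF assms, of k] assms by auto
  qed
  also have "UR n k * LC ?d (W n k) (vL n k k) ?J * dagger (UR n k) = LC ?d (W n k) (vR n k k) ?J"
  proof -
    have RcR: "\<forall>M\<in>set (map (R n k) [k..<n]). M \<in> carrier_mat ?d ?d" by (rule Rc) (use assms in auto)
    show ?thesis
      unfolding UR_def mprod_conj[OF RcR LC_carrier]
      using right_sweep[OF assms] assms by auto
  qed
  also have "\<dots> = LC ?d (W n k) (\<lambda>j. if j = k then 1 else 0) ?J"
    by (rule LC_cong) (simp add: vR_def)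
  also have "\<dots> = W n k k"
    by (rule LC_delta) (use assms W_carrier in auto)
  finally show ?thesis unfolding Ek_def .
qed

end
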